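(* Fix $k, n \in \mathbb{N}$. For $i \in \{0, \ldots, n\}$ let $$P_{k,n,i} = \left\{ x \in \Delta(n+1, k(n+1)) : \sum_{s=1}^{kt} x_{ki+s} \leq t, \quad t = 1, \ldots, n \right\},$$ where indices of coordinates are taken modulo $k(n+1)$ (with representatives in $\{1,\ldots,k(n+1)\}$). Then for $i \neq j$ the interiors of $P_{k,n,i}$ and $P_{k,n,j}$ are disjoint, and $\Delta(n+1, k(n+1)) = \bigcup_{i=0}^{n} P_{k,n,i}$.
   Context: The hypersimplex is $\Delta(k,n) = \{ (x_1,\ldots,x_n) \in [0,1]^n : \sum_{i=1}^n x_i = k\}$. Interiors are taken relative to the affine hull of the hypersimplex. *)

theory Defs
  imports "HOL-Analysis.Analysis"
begin

definition hypersimplex :: "nat \<Rightarrow> (real^'d::finite) set" where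
  "hypersimplex r = {x. (\<forall>i. 0 \<le> x $ i \<and> x $ i \<le> 1) \<and> (\<Sum>i\<in>UNIV. x $ i) = real r}"

text \<open>Coordinate number m (m >= 1) of x, where coordinates are numbered 1..N via the
  bijection e : {1..N} -> 'd and indices are read modulo N with representatives in {1..N}.\<close>
definition coord_mod :: "(nat \<Rightarrow> 'd) \<Rightarrow> nat \<Rightarrow> real^'d \<Rightarrow> nat \<Rightarrow> real" where
  "coord_mod e N x m = x $ e ((m - 1) mod N + 1)"

definition Pkni :: "(nat \<Rightarrow> 'd::finite) \<Rightarrow> nat \<Rightarrow> nat \<Rightarrow> nat \<Rightarrow> (real^'d) set" where
  "Pkni e k n i = {x \<in> hypersimplex (n+1).
      \<forall>t\<in>{1..n}. (\<Sum>s=1..k*t. coord_mod e (k*(n+1)) x (k*i+s)) \<le> real t}"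

end

theory Submission
  imports Defs
begin

definition Fs :: "(nat \<Rightarrow> 'd::finite) \<Rightarrow> nat \<Rightarrow> real^'d \<Rightarrow> nat \<Rightarrow> real" where
  "Fs e N x M = (\<Sum>s=1..M. coord_mod e N x s)"

lemma coord_period: "1 \<le> m \<Longrightarrow> 0 < N \<Longrightarrow> coord_mod e N x (m + N) = coord_mod e N x m"
  unfolding coord_mod_def
proof -
  assume "1 \<le> m" "0 < N"
  then have "m + N - 1 = (m - 1) + N" by simp
  then show "x $ e ((m + N - 1) mod N + 1) = x $ e ((m - 1) mod N + 1)" by simp
qed

lemma Fs_0[simp]: "Fs e N x 0 = 0"
  unfolding Fs_def by simp

lemma Fs_Suc: "Fs e N x (Suc M) = Fs e N x M + coord_mod e N x (Suc M)"
  unfolding Fs_def by simp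

lemma Fs_add: "0 < N \<Longrightarrow> Fs e N x (M + N) = Fs e N x M + Fs e N x N"
proof (induction M)
  case 0 then show ?case by simp
next
  case (Suc M)
  have "Fs e N x (Suc M + N) = Fs e N x (M + N) + coord_mod e N x (Suc M + N)"
    using Fs_Suc[of e N x "M+N"] by simp
  also have "coord_mod e N x (Suc M + N) = coord_mod e N x (Suc M)"
    using coord_period[of "Suc M" N e x] Suc.prems by simp
  finally show ?case using Suc Fs_Suc[of e N x M] by simp
qed

lemma Fs_full:
  assumes "bij_betw e {1..N} (UNIV :: 'd::finite set)"
  shows "Fs e N x N = (\<Sum>i\<in>UNIV. x $ i)"
proof -
  have "Fs e N x N = (\<Sum>s\<in>{1..N}. x $ e s)"
    unfolding Fs_def coord_mod_def
  proof (rule sum.cong)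
    fix s assume "s \<in> {1..N}"
    then have "(s - 1) mod N + 1 = s" by auto
    then show "x $ e ((s - 1) mod N + 1) = x $ e s" by simp
  qed simp
  also have "\<dots> = (\<Sum>i\<in>UNIV. x $ i)"
    using sum.reindex_bij_betw[OF assms, of "\<lambda>i. x $ i"] by simp
  finally show ?thesis .
qed

lemma Fs_window: "(\<Sum>s=1..L. coord_mod e N x (a+s)) = Fs e N x (a+L) - Fs e N x a"
proof (induction L)
  case 0 then show ?case by simp
next
  case (Suc L)
  then show ?case using Fs_Suc[of e N x "a+L"] by simp
qed

lemma Fs_lin: "Fs e N (x + d *\<^sub>R v) M = Fs e N x M + d * Fs e N v M"
  unfolding Fs_def coord_mod_def by (simp add: sum.distrib sum_distrib_left)

lemma P_char:
  "x \<in> Pkni e k n i \<longleftrightarrow> x \<in> hypersimplex (n+1) \<and>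
     (\<forall>t\<in>{1..n}. Fs e (k*(n+1)) x (k*(i+t)) - real (i+t) \<le> Fs e (k*(n+1)) x (k*i) - real i)"
proof -
  have "(\<Sum>s=1..k*t. coord_mod e (k*(n+1)) x (k*i+s)) = Fs e (k*(n+1)) x (k*(i+t)) - Fs e (k*(n+1)) x (k*i)" for t
  proof -
    have "k*i + k*t = k*(i+t)" by (simp add: algebra_simps)
    moreover have "(\<Sum>s=1..k*t. coord_mod e (k*(n+1)) x (k*i+s)) = Fs e (k*(n+1)) x (k*i + k*t) - Fs e (k*(n+1)) x (k*i)"
      by (rule Fs_window)
    ultimately show ?thesis by simp
  qed
  then show ?thesis unfolding Pkni_def by auto
qed

lemma g_period:
  assumes e: "bij_betw e {1..k*(n+1)} (UNIV :: 'd::finite set)" and k: "k > 0"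
    and x: "x \<in> hypersimplex (n+1)"
  shows "Fs e (k*(n+1)) x (k*m) - real m = Fs e (k*(n+1)) x (k*(m mod (n+1))) - real (m mod (n+1))"
proof -
  let ?N = "k*(n+1)"
  have full: "Fs e ?N x ?N = real (n+1)"
    using Fs_full[OF e, of x] x unfolding hypersimplex_def by simp
  have step: "Fs e ?N x (k*(r + (n+1))) - real (r + (n+1)) = Fs e ?N x (k*r) - real r" for r
  proof -
    have eq: "k*(r + (n+1)) = k*r + ?N" by (simp add: algebra_simps)
    have "Fs e ?N x (k*(r + (n+1))) = Fs e ?N x (k*r + ?N)" by (simp only: eq)
    also have "\<dots> = Fs e ?N x (k*r) + real (n+1)"
      using Fs_add[of ?N e x "k*r"] k full by simp
    finally have "Fs e ?N x (k*(r + (n+1))) = Fs e ?N x (k*r) + real (n+1)" .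
    then show ?thesis by simp
  qed
  have q: "Fs e ?N x (k*(r + q*(n+1))) - real (r + q*(n+1)) = Fs e ?N x (k*r) - real r" for q r
  proof (induction q)
    case 0 then show ?case by simp
  next
    case (Suc q)
    have eq: "r + Suc q*(n+1) = (r + q*(n+1)) + (n+1)" by simp
    show ?case unfolding eq by (simp only: step Suc.IH)
  qed
  have "m = m mod (n+1) + (m div (n+1))*(n+1)" by (simp only: mod_div_mult_eq)
  then show ?thesis using q[of "m mod (n+1)" "m div (n+1)"] by (simp only: mod_div_mult_eq)
qed

lemma covering:
  assumes e: "bij_betw e {1..k*(n+1)} (UNIV :: 'd::finite set)" and k: "k > 0"
    and x: "x \<in> hypersimplex (n+1)"
  shows "\<exists>i\<le>n. x \<in> Pkni e k n i"
proof -
  define g where "g m = Fs e (k*(n+1)) x (k*m) - real m" for m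
  let ?M = "Max (g ` {..n})"
  have "?M \<in> g ` {..n}" by (rule Max_in) auto
  then obtain i where i: "i \<le> n" "g i = ?M" by (metis atMost_iff imageE)
  have "g (i+t) \<le> g i" for t
  proof -
    have "g (i+t) = g ((i+t) mod (n+1))" unfolding g_def using g_period[OF e k x] by blast
    also have "\<dots> \<le> ?M" by (rule Max_ge) auto
    finally show ?thesis using i by simp
  qed
  then have "x \<in> Pkni e k n i" unfolding P_char using x by (simp add: g_def)
  then show ?thesis using i by blast
qed

lemma disj_aux:
  fixes e :: "nat \<Rightarrow> 'd::finite"
  assumes e: "bij_betw e {1..k*(n+1)} (UNIV :: 'd set)" and k: "k \<ge> 2"
    and ij: "i < j" "j \<le> n"
    and xi: "x \<in> (top_of_set (affine hull (hypersimplex (n+1) :: (real^'d) set))) interior_of Pkni e k n i"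
    and xj: "x \<in> Pkni e k n j"
  shows False
proof -
  define N where "N = k*(n+1)"
  define A where "A = affine hull (hypersimplex (n+1) :: (real^'d) set)"
  define g where "g y m = Fs e N y (k*m) - real m" for y m
  obtain T where T: "openin (top_of_set A) T" "x \<in> T" "T \<subseteq> Pkni e k n i"
    using xi unfolding interior_of_def A_def by blast
  have xPi: "x \<in> Pkni e k n i" using T by blast
  have xh: "x \<in> hypersimplex (n+1)" using xPi unfolding Pkni_def by blast
  have kpos: "k > 0" using k by simp
  have "\<forall>t\<in>{1..n}. g x (i+t) \<le> g x i"
    using xPi unfolding P_char g_def N_def by blast
  moreover have "j - i \<in> {1..n}" using ij by auto
  ultimately have "g x (i + (j-i)) \<le> g x i" by blast
  moreover have "i + (j-i) = j" using ij by simp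
  ultimately have gji: "g x j \<le> g x i" using ij by simp
  have "\<forall>t\<in>{1..n}. g x (j+t) \<le> g x j"
    using xj unfolding P_char g_def N_def by blast
  moreover have "n+1-(j-i) \<in> {1..n}" using ij by auto
  ultimately have h1: "g x (j + (n+1-(j-i))) \<le> g x j" by blast
  have h2: "j + (n+1-(j-i)) = i + (n+1)" using ij by simp
  have h3: "g x (i + (n+1)) = g x i"
  proof -
    have "g x (i + (n+1)) = g x ((i + (n+1)) mod (n+1))"
      using g_period[OF e kpos xh, of "i + (n+1)"] unfolding g_def N_def by blast
    moreover have "(i + (n+1)) mod (n+1) = i" using ij by (simp only: mod_add_self2) simp
    ultimately show ?thesis by simp
  qed
  have gij: "g x i \<le> g x j" using h1 unfolding h2 h3 .
  have inj: "inj_on e {1..N}" using e bij_betw_imp_inj_on unfolding N_def by blast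
  have kjN: "k*j + 1 \<le> N"
  proof -
    have a1: "k*j \<le> k*n" using ij by simp
    have a2: "N = k*n + k" unfolding N_def by (simp add: algebra_simps)
    show ?thesis using a1 a2 k by linarith
  qed
  have kij: "k*i + k \<le> k*j"
  proof -
    have "k*(i+1) \<le> k*j" using ij by (intro mult_le_mono2) simp
    then show ?thesis by (simp add: algebra_simps)
  qed
  define a where "a = e (k*i+1)"
  define b where "b = e (k*j+1)"
  have ab: "a \<noteq> b" unfolding a_def b_def
    using inj_on_eq_iff[OF inj, of "k*i+1" "k*j+1"] kjN kij k by auto
  have cardd: "CARD('d) = N" using bij_betw_same_card[OF e] unfolding N_def by simp
  have "card (UNIV - {a,b}) = N - 2" using ab cardd by (simp add: card_Diff_subset)
  moreover have "n \<le> N - 2"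
  proof -
    have "2*(n+1) \<le> k*(n+1)" using k by (rule mult_right_mono) simp
    then show ?thesis unfolding N_def by simp
  qed
  ultimately obtain R where R: "R \<subseteq> UNIV - {a,b}" "card R = n" "finite R"
    by (metis obtain_subset_with_card_n)
  define p where "p = ((\<chi> l. if l \<in> insert a R then 1 else 0) :: real^'d)"
  define q where "q = ((\<chi> l. if l \<in> insert b R then 1 else 0) :: real^'d)"
  have sumind: "(\<Sum>l\<in>UNIV. if l \<in> S then 1 else 0 :: real) = real (card S)" for S :: "'d set"
    by (simp add: sum.If_cases)
  have aR: "a \<notin> R" "b \<notin> R" using R by auto
  have ph: "p \<in> hypersimplex (n+1)" unfolding hypersimplex_def p_def
    using R aR sumind[of "insert a R"] by auto
  have qh: "q \<in> hypersimplex (n+1)" unfolding hypersimplex_def q_def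
    using R aR sumind[of "insert b R"] by auto
  define v where "v = p - q"
  have v: "v $ l = (if l = a then 1 else 0) - (if l = b then 1 else 0)" for l
    unfolding v_def p_def q_def using R by auto
  obtain U where U: "open U" "T = A \<inter> U" using T(1) openin_open by blast
  obtain r where r: "r > 0" "ball x r \<subseteq> U" using U T(2) open_contains_ball by blast
  define d where "d = r / (2 * (norm v + 1))"
  have nv: "2 * (norm v + 1) > 0" by (smt (verit) norm_ge_zero)
  have dpos: "d > 0" unfolding d_def using r(1) nv by (rule divide_pos_pos)
  define y where "y = x + d *\<^sub>R v"
  have yA: "y \<in> A" unfolding y_def v_def A_def
    by (rule mem_affine_3_minus[OF affine_affine_hull hull_inc[OF xh] hull_inc[OF ph] hull_inc[OF qh]])
  have "norm (d *\<^sub>R v) = d * norm v" using dpos by simp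
  also have "\<dots> < r"
  proof -
    have "d * norm v \<le> d * (norm v + 1)" using dpos by simp
    also have "\<dots> = r / 2" unfolding d_def using nv by (simp add: field_simps)
    finally show ?thesis using r by simp
  qed
  finally have "y \<in> ball x r" unfolding y_def by (simp add: dist_norm)
  then have "y \<in> T" using yA r U by blast
  then have "y \<in> Pkni e k n i" using T by blast
  then have "\<forall>t\<in>{1..n}. g y (i+t) \<le> g y i"
    unfolding P_char g_def N_def by blast
  moreover have "j - i \<in> {1..n}" using ij by auto
  ultimately have "g y (i + (j-i)) \<le> g y i" by blast
  moreover have "i + (j-i) = j" using ij by simp
  ultimately have gy: "g y j \<le> g y i" using ij by simp
  define L where "L = k*j - k*i"
  have L1: "L \<ge> 1" unfolding L_def using kij k by simp
  have termv: "coord_mod e N v (k*i+s) = (if s = 1 then 1 else 0)" if s: "s \<in> {1..L}" for s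
  proof -
    have s1: "1 \<le> k*i+s" "k*i+s \<le> N" using s kjN kij unfolding L_def by auto
    then have "(k*i+s-1) mod N + 1 = k*i+s" by auto
    then have "coord_mod e N v (k*i+s) = v $ e (k*i+s)" unfolding coord_mod_def by simp
    also have "e (k*i+s) = a \<longleftrightarrow> s = 1"
      unfolding a_def using inj_on_eq_iff[OF inj, of "k*i+s" "k*i+1"] s1 kjN kij by auto
    moreover have "e (k*i+s) \<noteq> b"
      unfolding b_def using inj_on_eq_iff[OF inj, of "k*i+s" "k*j+1"] s1 kjN s unfolding L_def by auto
    ultimately show ?thesis using v by auto
  qed
  have "(\<Sum>s=1..L. coord_mod e N v (k*i+s)) = (\<Sum>s=1..L. if s = 1 then 1 else 0 :: real)"
    using termv by (rule sum.cong[OF refl])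
  also have "\<dots> = 1" using L1 by simp
  finally have "Fs e N v (k*i + L) - Fs e N v (k*i) = 1" using Fs_window[where e=e and N=N and x=v and L=L and a="k*i"] by simp
  moreover have "k*i + L = k*j" unfolding L_def using kij by simp
  ultimately have fv: "Fs e N v (k*j) - Fs e N v (k*i) = 1" by simp
  have "g y m = g x m + d * Fs e N v (k*m)" for m
    unfolding g_def y_def Fs_lin by simp
  then have "g y j - g y i = (g x j - g x i) + d * (Fs e N v (k*j) - Fs e N v (k*i))"
    by (simp add: algebra_simps)
  also have "\<dots> = d" using gij gji fv by simp
  finally show False using gy dpos by simp
qed

theorem mainTheorem2:
  fixes k n :: nat and e :: "nat \<Rightarrow> 'd::finite"
  assumes e: "bij_betw e {1..k*(n+1)} (UNIV :: 'd set)"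
    and k: "k \<ge> 2"
  shows "(\<forall>i\<le>n. \<forall>j\<le>n. i \<noteq> j \<longrightarrow>
            ((top_of_set (affine hull (hypersimplex (n+1) :: (real^'d) set))) interior_of Pkni e k n i)
          \<inter> ((top_of_set (affine hull (hypersimplex (n+1) :: (real^'d) set))) interior_of Pkni e k n j)
          = {})
      \<and> (hypersimplex (n+1) :: (real^'d) set) = (\<Union>i\<le>n. Pkni e k n i)"
proof (intro conjI allI impI)
  let ?I = "\<lambda>i. (top_of_set (affine hull (hypersimplex (n+1) :: (real^'d) set))) interior_of Pkni e k n i"
  fix i j assume ij: "i \<le> n" "j \<le> n" "i \<noteq> j"
  show "?I i \<inter> ?I j = {}"
  proof (rule ccontr)
    assume "?I i \<inter> ?I j \<noteq> {}"
    then obtain x where xi: "x \<in> ?I i" and xj: "x \<in> ?I j" by blast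
    have "x \<in> Pkni e k n i" using xi interior_of_subset by (rule subsetD[rotated])
    have "x \<in> Pkni e k n j" using xj interior_of_subset by (rule subsetD[rotated])
    show False
    proof (cases "i < j")
      case True
      show False by (rule disj_aux[OF e k True ij(2) xi \<open>x \<in> Pkni e k n j\<close>])
    next
      case False
      then have "j < i" using ij by simp
      then show False by (rule disj_aux[OF e k _ ij(1) xj \<open>x \<in> Pkni e k n i\<close>])
    qed
  qed
next
  have kpos: "k > 0" using k by simp
  show "(hypersimplex (n+1) :: (real^'d) set) = (\<Union>i\<le>n. Pkni e k n i)"
  proof
    show "hypersimplex (n+1) \<subseteq> (\<Union>i\<le>n. Pkni e k n i)"
    proof
      fix x :: "real^'d" assume "x \<in> hypersimplex (n+1)"
      from covering[OF e kpos this] show "x \<in> (\<Union>i\<le>n. Pkni e k n i)" by blast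
    qed
    show "(\<Union>i\<le>n. Pkni e k n i) \<subseteq> hypersimplex (n+1)"
      unfolding Pkni_def by blast
  qed
qed

end
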